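(* Let $P^1,\dots,P^4\in\mathbb{R}^n$ be in general position, let $Q^0$ be the equidistant point from $P^1,\dots,P^4$ with barycentric coordinate $\boldsymbol\lambda^0$, and suppose $\lambda^0_1<0$, $\lambda^0_2<0$, $\lambda^0_3\ge0$, $\lambda^0_4\ge0$. Let $Q^{1(1)}=\pi(Q^0|L(P^2,P^3,P^4))$ and $Q^{1(2)}=\pi(Q^0|L(P^1,P^3,P^4))$, with barycentric coordinates $\boldsymbol\lambda^{1(1)},\boldsymbol\lambda^{1(2)}$ about $P^1,\dots,P^4$, and suppose $\lambda^{1(2)}_1<0$. If moreover $\lambda^{1(1)}_2\ge0$, $\lambda^{1(1)}_3\ge0$, $\lambda^{1(1)}_4\ge0$, then the center of the smallest enclosing circle of $P^1,\dots,P^4$ is $Q^\ast=Q^{1(1)}$ and its radius is $d^\ast=d(P^2,Q^{1(1)})$.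
   Context: $d$ is the Euclidean distance. Points are in general position if $P^2-P^1,\dots,P^m-P^1$ are linearly independent. $L(S^1,\dots,S^r)$ is the affine subspace spanned by the points; $\pi(Q'|L)$ is the orthogonal projection onto the affine subspace $L$. The barycentric coordinate of $Q\in L(P^1,\dots,P^m)$ is the unique $\boldsymbol\lambda$ with $\sum_i\lambda_i=1$, $Q=\sum_i\lambda_iP^i$. The equidistant point is the unique $Q^0\in L(P^1,\dots,P^m)$ with all $d(P^i,Q^0)$ equal. The smallest enclosing circle has center $Q^\ast$ attaining $\min_Q\max_i d(P^i,Q)$ and radius $d^\ast$ equal to this minimum. *)

theory Defs
  imports "HOL-Analysis.Analysis"
begin

text \<open>Points are a family P :: nat => 'a indexed by 1..m.\<close>

definition general_position :: "(nat \<Rightarrow> 'a::euclidean_space) \<Rightarrow> nat \<Rightarrow> bool" where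
  "general_position P m \<longleftrightarrow>
     (\<forall>c::nat \<Rightarrow> real. (\<Sum>i\<in>{2..m}. c i *\<^sub>R (P i - P 1)) = 0 \<longrightarrow> (\<forall>i\<in>{2..m}. c i = 0))"

definition aff_span :: "(nat \<Rightarrow> 'a::euclidean_space) \<Rightarrow> nat set \<Rightarrow> 'a set" where
  "aff_span P S = affine hull (P ` S)"

definition orth_proj :: "'a::euclidean_space \<Rightarrow> 'a set \<Rightarrow> 'a" where
  "orth_proj Q L = (THE q. q \<in> L \<and> (\<forall>x\<in>L. (Q - q) \<bullet> (x - q) = 0))"

definition bary :: "(nat \<Rightarrow> 'a::euclidean_space) \<Rightarrow> nat \<Rightarrow> 'a \<Rightarrow> (nat \<Rightarrow> real)" where
  "bary P m Q = (THE l. (\<forall>i. i \<notin> {1..m} \<longrightarrow> l i = 0) \<and> (\<Sum>i\<in>{1..m}. l i) = 1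
                       \<and> Q = (\<Sum>i\<in>{1..m}. l i *\<^sub>R P i))"

definition equidistant_point :: "(nat \<Rightarrow> 'a::euclidean_space) \<Rightarrow> nat \<Rightarrow> 'a" where
  "equidistant_point P m = (THE Q. Q \<in> aff_span P {1..m} \<and>
       (\<forall>i\<in>{1..m}. \<forall>j\<in>{1..m}. dist (P i) Q = dist (P j) Q))"

definition max_dist :: "(nat \<Rightarrow> 'a::euclidean_space) \<Rightarrow> nat \<Rightarrow> 'a \<Rightarrow> real" where
  "max_dist P m Q = Max ((\<lambda>i. dist (P i) Q) ` {1..m})"

definition sec_center :: "(nat \<Rightarrow> 'a::euclidean_space) \<Rightarrow> nat \<Rightarrow> 'a" where
  "sec_center P m = (THE Q. \<forall>Q'. max_dist P m Q \<le> max_dist P m Q')"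

definition sec_radius :: "(nat \<Rightarrow> 'a::euclidean_space) \<Rightarrow> nat \<Rightarrow> real" where
  "sec_radius P m = (INF Q. max_dist P m Q)"

end

theory Submission
  imports Defs
begin
lemma aff_iff:
  fixes P :: "nat \<Rightarrow> 'a::euclidean_space"
  assumes fin: "finite S"
  shows "x \<in> affine hull (P ` S) \<longleftrightarrow> (\<exists>l. sum l S = 1 \<and> x = (\<Sum>i\<in>S. l i *\<^sub>R P i))"
proof
  assume "x \<in> affine hull (P ` S)"
  moreover have "affine hull (P ` S) \<subseteq> {x. \<exists>l. sum l S = 1 \<and> x = (\<Sum>i\<in>S. l i *\<^sub>R P i)}"
  proof (rule hull_minimal)
    show "P ` S \<subseteq> {x. \<exists>l. sum l S = 1 \<and> x = (\<Sum>i\<in>S. l i *\<^sub>R P i)}"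
    proof clarify
      fix i assume "i \<in> S"
      then show "\<exists>l. sum l S = 1 \<and> P i = (\<Sum>j\<in>S. l j *\<^sub>R P j)"
      proof (intro exI[of _ "\<lambda>j. if j = i then 1 else 0"] conjI)
        have "(\<Sum>j\<in>S. (if j = i then 1 else 0) *\<^sub>R P j) = (\<Sum>j\<in>S. if j = i then P j else 0)"
          by (rule sum.cong) auto
        then show "P i = (\<Sum>j\<in>S. (if j = i then 1 else 0) *\<^sub>R P j)" using \<open>i \<in> S\<close> fin by simp
      qed (use \<open>i \<in> S\<close> fin in simp)
    qed
    show "affine {x. \<exists>l. sum l S = 1 \<and> x = (\<Sum>i\<in>S. l i *\<^sub>R P i)}"
      unfolding affine_def
    proof clarify
      fix l1 l2 :: "nat \<Rightarrow> real" and u v :: real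
      assume "sum l1 S = 1" "sum l2 S = 1" "u + v = 1"
      then show "\<exists>l. sum l S = 1 \<and> u *\<^sub>R (\<Sum>i\<in>S. l1 i *\<^sub>R P i) + v *\<^sub>R (\<Sum>i\<in>S. l2 i *\<^sub>R P i) = (\<Sum>i\<in>S. l i *\<^sub>R P i)"
        by (intro exI[of _ "\<lambda>i. u * l1 i + v * l2 i"])
           (simp add: sum.distrib scaleR_sum_right scaleR_add_left flip: sum_distrib_left)
    qed
  qed
  ultimately show "\<exists>l. sum l S = 1 \<and> x = (\<Sum>i\<in>S. l i *\<^sub>R P i)" by blast
next
  assume "\<exists>l. sum l S = 1 \<and> x = (\<Sum>i\<in>S. l i *\<^sub>R P i)"
  then obtain l where l: "sum l S = 1" "x = (\<Sum>i\<in>S. l i *\<^sub>R P i)" by blast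
  define u where "u y = sum l {i\<in>S. P i = y}" for y
  have "sum u (P ` S) = 1" unfolding u_def using sum.image_gen[OF fin, of l P] l by simp
  moreover have "(\<Sum>v\<in>P ` S. u v *\<^sub>R v) = x"
  proof -
    have "x = (\<Sum>y\<in>P ` S. \<Sum>i\<in>{i\<in>S. P i = y}. l i *\<^sub>R P i)"
      using sum.image_gen[OF fin, of "\<lambda>i. l i *\<^sub>R P i" P] l by simp
    also have "\<dots> = (\<Sum>y\<in>P ` S. u y *\<^sub>R y)"
      unfolding u_def scaleR_sum_left by (intro sum.cong refl) auto
    finally show ?thesis by simp
  qed
  ultimately show "x \<in> affine hull (P ` S)" using affine_hull_finite[of "P ` S"] fin by auto
qed

lemma sum4: "(\<Sum>i\<in>{1..4::nat}. f i) = f 1 + f 2 + f 3 + (f 4 :: 'b::comm_monoid_add)"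
  by (simp add: numeral_eq_Suc add.assoc)

lemma gp4:
  fixes P :: "nat \<Rightarrow> 'a::euclidean_space"
  assumes gp: "general_position P 4"
    and eq: "c2 *\<^sub>R (P 2 - P 1) + c3 *\<^sub>R (P 3 - P 1) + c4 *\<^sub>R (P 4 - P 1) = 0"
  shows "c2 = 0 \<and> c3 = 0 \<and> c4 = 0"
proof -
  define c where "c i = (if i = 2 then c2 else if i = 3 then c3 else c4)" for i :: nat
  have s: "{2..4::nat} = {2,3,4}" by auto
  have "(\<Sum>i\<in>{2..4}. c i *\<^sub>R (P i - P 1)) = 0"
    unfolding s using eq by (simp add: c_def add.assoc)
  with gp have "\<forall>i\<in>{2..4}. c i = 0" unfolding general_position_def by blast
  then show ?thesis unfolding s c_def by auto
qed

lemma bary_eq: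
  fixes P :: "nat \<Rightarrow> 'a::euclidean_space"
  assumes gp: "general_position P 4"
    and l: "sum l {1..4} = 1" "Q = (\<Sum>i\<in>{1..4}. l i *\<^sub>R P i)"
  shows "\<forall>i\<in>{1..4}. bary P 4 Q i = l i"
proof -
  define l' where "l' i = (if i \<in> {1..4} then l i else 0)" for i :: nat
  have sl: "sum l' {1..4} = sum l {1..4}" "(\<Sum>i\<in>{1..4}. l' i *\<^sub>R P i) = (\<Sum>i\<in>{1..4}. l i *\<^sub>R P i)"
    by (auto simp: l'_def intro!: sum.cong)
  have "bary P 4 Q = l'"
    unfolding bary_def
  proof (rule the_equality)
    show "(\<forall>i. i \<notin> {1..4} \<longrightarrow> l' i = 0) \<and> sum l' {1..4} = 1 \<and> Q = (\<Sum>i\<in>{1..4}. l' i *\<^sub>R P i)"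
      using sl l by (simp add: l'_def)
  next
    fix m assume m: "(\<forall>i. i \<notin> {1..4} \<longrightarrow> m i = 0) \<and> sum m {1..4} = 1 \<and> Q = (\<Sum>i\<in>{1..4}. m i *\<^sub>R P i)"
    have e1: "m 1 + m 2 + m 3 + m 4 = l 1 + l 2 + l 3 + l 4" using m l unfolding sum4 by simp
    have e2: "m 1 *\<^sub>R P 1 + m 2 *\<^sub>R P 2 + m 3 *\<^sub>R P 3 + m 4 *\<^sub>R P 4 = l 1 *\<^sub>R P 1 + l 2 *\<^sub>R P 2 + l 3 *\<^sub>R P 3 + l 4 *\<^sub>R P 4"
      using m l unfolding sum4 by simp
    have m1: "m 1 = l 1 + l 2 + l 3 + l 4 - m 2 - m 3 - m 4" using e1 by simp
    have "(m 2 - l 2) *\<^sub>R (P 2 - P 1) + (m 3 - l 3) *\<^sub>R (P 3 - P 1) + (m 4 - l 4) *\<^sub>R (P 4 - P 1) = 0"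
      using e2 unfolding m1 by (simp add: algebra_simps)
    from gp4[OF gp this] have "m 2 = l 2" "m 3 = l 3" "m 4 = l 4" by auto
    with m1 have "m 1 = l 1" by simp
    show "m = l'"
    proof
      fix i show "m i = l' i"
      proof (cases "i \<in> {1..4}")
        case True
        then have "i = 1 \<or> i = 2 \<or> i = 3 \<or> i = 4" by auto
        then show ?thesis using \<open>m 1 = l 1\<close> \<open>m 2 = l 2\<close> \<open>m 3 = l 3\<close> \<open>m 4 = l 4\<close> True
          by (auto simp: l'_def)
      qed (use m in \<open>auto simp add: l'_def\<close>)
    qed
  qed
  then show ?thesis by (simp add: l'_def)
qed

lemma bary_hull:
  fixes P :: "nat \<Rightarrow> 'a::euclidean_space"
  assumes gp: "general_position P 4" and Q: "Q \<in> aff_span P {1..4}"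
  obtains l where "sum l {1..4} = 1" "Q = (\<Sum>i\<in>{1..4}. l i *\<^sub>R P i)" "\<forall>i\<in>{1..4}. bary P 4 Q i = l i"
  using Q bary_eq[OF gp] unfolding aff_span_def aff_iff[OF finite_atLeastAtMost] by blast


lemma span3:
  fixes a b c :: "'a::euclidean_space"
  assumes "y \<in> span {a, b, c}"
  obtains k1 k2 k3 where "y = k1 *\<^sub>R a + k2 *\<^sub>R b + k3 *\<^sub>R c"
proof -
  from assms obtain k1 where "y - k1 *\<^sub>R a \<in> span {b, c}" by (auto simp: span_insert)
  then obtain k2 where "y - k1 *\<^sub>R a - k2 *\<^sub>R b \<in> span {c}" by (auto simp: span_insert)
  then obtain k3 where "y - k1 *\<^sub>R a - k2 *\<^sub>R b - k3 *\<^sub>R c \<in> span {}" by (auto simp: span_insert)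
  then have "y = k1 *\<^sub>R a + k2 *\<^sub>R b + k3 *\<^sub>R c" by (simp add: algebra_simps)
  then show ?thesis using that by blast
qed

lemma span2:
  fixes a b :: "'a::euclidean_space"
  assumes "y \<in> span {a, b}"
  obtains k1 k2 where "y = k1 *\<^sub>R a + k2 *\<^sub>R b"
proof -
  from assms obtain k1 where "y - k1 *\<^sub>R a \<in> span {b}" by (auto simp: span_insert)
  then obtain k2 where "y - k1 *\<^sub>R a - k2 *\<^sub>R b \<in> span {}" by (auto simp: span_insert)
  then have "y = k1 *\<^sub>R a + k2 *\<^sub>R b" by (simp add: algebra_simps)
  then show ?thesis using that by blast
qed

lemma hull4_iff:
  fixes P :: "nat \<Rightarrow> 'a::euclidean_space"
  shows "x \<in> aff_span P {1..4} \<longleftrightarrow> (\<exists>a b c d. a + b + c + d = 1 \<and> x = a *\<^sub>R P 1 + b *\<^sub>R P 2 + c *\<^sub>R P 3 + d *\<^sub>R P 4)"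
  unfolding aff_span_def aff_iff[OF finite_atLeastAtMost] sum4
  apply safe
   apply blast
  subgoal for a b c d
    by (rule exI[of _ "\<lambda>i. if i = 1 then a else if i = 2 then b else if i = 3 then c else d"]) simp
  done

lemma hull3_iff:
  fixes P :: "nat \<Rightarrow> 'a::euclidean_space"
  shows "x \<in> aff_span P {2,3,4} \<longleftrightarrow> (\<exists>b c d. b + c + d = 1 \<and> x = b *\<^sub>R P 2 + c *\<^sub>R P 3 + d *\<^sub>R P 4)"
  unfolding aff_span_def aff_iff[OF finite.insertI[OF finite.insertI[OF finite.insertI[OF finite.emptyI]]]]
  apply (simp add: add.assoc)
  apply safe
   apply blast
  subgoal for b c d
    by (rule exI[of _ "\<lambda>i. if i = 2 then b else if i = 3 then c else d"]) simp
  done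

lemma orth_proj_char:
  fixes P :: "nat \<Rightarrow> 'a::euclidean_space"
  defines "L \<equiv> aff_span P {2,3,4}"
  shows "orth_proj Q L \<in> L \<and> (\<forall>x\<in>L. (Q - orth_proj Q L) \<bullet> (x - orth_proj Q L) = 0)"
proof -
  obtain y z where y: "y \<in> span {P 3 - P 2, P 4 - P 2}"
    and z: "\<And>w. w \<in> span {P 3 - P 2, P 4 - P 2} \<Longrightarrow> orthogonal z w" and yz: "Q - P 2 = y + z"
    using orthogonal_subspace_decomp_exists by metis
  obtain k3 k4 where k: "y = k3 *\<^sub>R (P 3 - P 2) + k4 *\<^sub>R (P 4 - P 2)" using span2[OF y] by blast
  have z3: "z \<bullet> (P 3 - P 2) = 0" and z4: "z \<bullet> (P 4 - P 2) = 0"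
    using z[of "P 3 - P 2"] z[of "P 4 - P 2"] by (auto simp: orthogonal_def span_base)
  define q where "q = P 2 + y"
  have qL: "q \<in> L" unfolding L_def hull3_iff
    by (rule exI[of _ "1 - k3 - k4"], rule exI[of _ k3], rule exI[of _ k4]) (simp add: q_def k algebra_simps)
  have orth: "\<forall>x\<in>L. (Q - q) \<bullet> (x - q) = 0"
  proof
    fix x assume "x \<in> L"
    then obtain b c d where bcd: "b + c + d = 1" "x = b *\<^sub>R P 2 + c *\<^sub>R P 3 + d *\<^sub>R P 4"
      unfolding L_def hull3_iff by blast
    have b: "b = 1 - c - d" using bcd by simp
    have "x - q = (c - k3) *\<^sub>R (P 3 - P 2) + (d - k4) *\<^sub>R (P 4 - P 2)"
      unfolding q_def k bcd(2) b by (simp add: algebra_simps)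
    moreover have "Q - q = z" using yz unfolding q_def by (simp add: algebra_simps)
    ultimately show "(Q - q) \<bullet> (x - q) = 0" using z3 z4 by (simp add: inner_simps)
  qed
  have "orth_proj Q L = q"
    unfolding orth_proj_def
  proof (rule the_equality)
    show "q \<in> L \<and> (\<forall>x\<in>L. (Q - q) \<bullet> (x - q) = 0)" using qL orth by blast
  next
    fix q' assume q': "q' \<in> L \<and> (\<forall>x\<in>L. (Q - q') \<bullet> (x - q') = 0)"
    have "(Q - q) \<bullet> (q' - q) = 0" using orth q' by blast
    moreover have "(Q - q') \<bullet> (q - q') = 0" using qL q' by blast
    ultimately have "(q' - q) \<bullet> (q' - q) = 0" by (simp add: algebra_simps inner_simps inner_commute)
    then show "q' = q" by simp
  qed
  then show ?thesis using qL orth by simp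
qed


lemma equi_char:
  fixes P :: "nat \<Rightarrow> 'a::euclidean_space"
  assumes gp: "general_position P 4"
  shows "equidistant_point P 4 \<in> aff_span P {1..4} \<and>
    (\<forall>i\<in>{1..4}. \<forall>j\<in>{1..4}. dist (P i) (equidistant_point P 4) = dist (P j) (equidistant_point P 4))"
proof -
  define w2 w3 w4 where "w2 = P 2 - P 1" and "w3 = P 3 - P 1" and "w4 = P 4 - P 1"
  have d23: "w2 \<noteq> w3" using gp4[OF gp, of 1 "-1" 0] by (auto simp: w2_def w3_def)
  have d24: "w2 \<noteq> w4" using gp4[OF gp, of 1 0 "-1"] by (auto simp: w2_def w4_def)
  have d34: "w3 \<noteq> w4" using gp4[OF gp, of 0 1 "-1"] by (auto simp: w3_def w4_def)
  have ind: "independent {w2, w3, w4}"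
  proof
    assume "dependent {w2, w3, w4}"
    then obtain u where u: "\<exists>v\<in>{w2, w3, w4}. u v \<noteq> 0" "(\<Sum>v\<in>{w2, w3, w4}. u v *\<^sub>R v) = 0"
      unfolding dependent_finite[OF finite.insertI[OF finite.insertI[OF finite.insertI[OF finite.emptyI]]]] by blast
    then have "u w2 *\<^sub>R w2 + u w3 *\<^sub>R w3 + u w4 *\<^sub>R w4 = 0" using d23 d24 d34 by (simp add: add.assoc)
    from gp4[OF gp this[unfolded w2_def w3_def w4_def]] u(1) show False by (auto simp: w2_def w3_def w4_def)
  qed
  obtain g :: "'a \<Rightarrow> real" where g: "linear g" "\<forall>x\<in>{w2, w3, w4}. g x = (x \<bullet> x) / 2"
    using real_vector.linear_independent_extend[OF ind, where f="\<lambda>x. (x \<bullet> x) / 2"] by auto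
  define a where "a = adjoint g 1"
  have ga: "g x = x \<bullet> a" for x using adjoint_works[OF g(1), of x 1] by (simp add: a_def)
  obtain y z where y: "y \<in> span {w2, w3, w4}"
    and z: "\<And>w. w \<in> span {w2, w3, w4} \<Longrightarrow> orthogonal z w" and yz: "a = y + z"
    using orthogonal_subspace_decomp_exists by metis
  have yw: "y \<bullet> w = (w \<bullet> w) / 2" if "w \<in> {w2, w3, w4}" for w
  proof -
    have "z \<bullet> w = 0" using z[of w] that by (auto simp: orthogonal_def span_base)
    then have "y \<bullet> w = a \<bullet> w" unfolding yz by (simp add: inner_simps)
    also have "\<dots> = g w" by (simp add: ga inner_commute)
    finally show ?thesis using g(2) that by auto
  qed
  obtain k2 k3 k4 where k: "y = k2 *\<^sub>R w2 + k3 *\<^sub>R w3 + k4 *\<^sub>R w4" using span3[OF y] by blast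
  define Q where "Q = P 1 + y"
  have Qh: "Q \<in> aff_span P {1..4}" unfolding hull4_iff
    by (rule exI[of _ "1 - k2 - k3 - k4"], rule exI[of _ k2], rule exI[of _ k3], rule exI[of _ k4]) (simp add: Q_def k w2_def w3_def w4_def algebra_simps)
  have dj: "dist (P j) Q = dist (P 1) Q" if "j \<in> {2,3,4}" for j
  proof -
    have wj: "P j - P 1 \<in> {w2, w3, w4}" using that by (auto simp: w2_def w3_def w4_def)
    have e: "P j - Q = (P j - P 1) - y" by (simp add: Q_def)
    have gen: "(u - y) \<bullet> (u - y) = u \<bullet> u - 2 * (y \<bullet> u) + y \<bullet> y" for u
      by (simp add: inner_diff_left inner_diff_right inner_commute)
    have "(P j - Q) \<bullet> (P j - Q) = (P j - P 1) \<bullet> (P j - P 1) - 2 * (y \<bullet> (P j - P 1)) + y \<bullet> y"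
      unfolding e by (rule gen)
    also have "\<dots> = y \<bullet> y" using yw[OF wj] by simp
    also have "\<dots> = (P 1 - Q) \<bullet> (P 1 - Q)" by (simp add: Q_def)
    finally show ?thesis by (simp add: dist_norm norm_eq_sqrt_inner)
  qed
  have allQ: "\<forall>i\<in>{1..4}. \<forall>j\<in>{1..4}. dist (P i) Q = dist (P j) Q"
  proof -
    have "dist (P i) Q = dist (P 1) Q" if "i \<in> {1..4}" for i
    proof -
      from that have "i = 1 \<or> i \<in> {2,3,4}" by auto
      then show ?thesis using dj by blast
    qed
    note h = this
    show ?thesis
    proof (intro ballI)
      fix i j :: nat assume "i \<in> {1..4}" "j \<in> {1..4}"
      then show "dist (P i) Q = dist (P j) Q" using h[of i] h[of j] by linarith
    qed
  qed
  have uniq: "Q' = Q" if Q': "Q' \<in> aff_span P {1..4}" "\<forall>i\<in>{1..4}. \<forall>j\<in>{1..4}. dist (P i) Q' = dist (P j) Q'" for Q'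
  proof -
    have key: "(P j - P 1) \<bullet> (Q' - Q) = 0" if "j \<in> {1..4}" for j
    proof -
      have "dist (P j) Q' = dist (P 1) Q'" "dist (P j) Q = dist (P 1) Q"
        using Q'(2)[rule_format, OF that, of 1] allQ[rule_format, OF that, of 1] by auto
      then have "(P j - Q') \<bullet> (P j - Q') = (P 1 - Q') \<bullet> (P 1 - Q')" "(P j - Q) \<bullet> (P j - Q) = (P 1 - Q) \<bullet> (P 1 - Q)"
        by (simp_all add: dist_norm norm_eq_sqrt_inner)
      then show ?thesis by (simp add: inner_simps inner_commute algebra_simps)
    qed
    obtain a b c d where abcd: "a + b + c + d = 1" "Q' = a *\<^sub>R P 1 + b *\<^sub>R P 2 + c *\<^sub>R P 3 + d *\<^sub>R P 4"
      using Q'(1) unfolding hull4_iff by blast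
    have a: "a = 1 - b - c - d" using abcd(1) by simp
    have "Q' - Q = (b - k2) *\<^sub>R w2 + (c - k3) *\<^sub>R w3 + (d - k4) *\<^sub>R w4"
      unfolding abcd(2) Q_def k w2_def w3_def w4_def a by (simp add: algebra_simps)
    then have "(Q' - Q) \<bullet> (Q' - Q) = ((b - k2) *\<^sub>R w2 + (c - k3) *\<^sub>R w3 + (d - k4) *\<^sub>R w4) \<bullet> (Q' - Q)"
      by (rule arg_cong[where f="\<lambda>t. t \<bullet> (Q' - Q)"])
    also have "\<dots> = (b - k2) * (w2 \<bullet> (Q' - Q)) + (c - k3) * (w3 \<bullet> (Q' - Q)) + (d - k4) * (w4 \<bullet> (Q' - Q))"
      by (simp only: inner_add_left inner_scaleR_left)
    also have "\<dots> = 0" using key[of 2] key[of 3] key[of 4] by (simp add: w2_def w3_def w4_def)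
    finally show ?thesis by simp
  qed
  have "equidistant_point P 4 = Q"
    unfolding equidistant_point_def
  proof (rule the_equality)
    show "Q \<in> aff_span P {1..4} \<and> (\<forall>i\<in>{1..4}. \<forall>j\<in>{1..4}. dist (P i) Q = dist (P j) Q)"
      using Qh allQ by blast
  next
    fix Q' assume "Q' \<in> aff_span P {1..4} \<and> (\<forall>i\<in>{1..4}. \<forall>j\<in>{1..4}. dist (P i) Q' = dist (P j) Q')"
    then show "Q' = Q" using uniq by blast
  qed
  then show ?thesis using Qh allQ by (simp only:)
qed


lemma sq_shift:
  fixes x c q :: "'a::euclidean_space"
  shows "(x - c) \<bullet> (x - c) = (x - q) \<bullet> (x - q) + 2 * ((x - c) \<bullet> (q - c)) - (q - c) \<bullet> (q - c)"
proof -
  have "x - c = (x - q) + (q - c)" by simp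
  have e: "(u + w) \<bullet> (u + w) = u \<bullet> u + 2 * (u \<bullet> w) + w \<bullet> w" for u w :: 'a
    by (simp add: inner_add_left inner_add_right inner_commute)
  have "(x - c) \<bullet> (x - c) = (x - q) \<bullet> (x - q) + 2 * ((x - q) \<bullet> (q - c)) + (q - c) \<bullet> (q - c)"
    using e[of "x - q" "q - c"] by simp
  moreover have "(x - c) \<bullet> (q - c) = (x - q) \<bullet> (q - c) + (q - c) \<bullet> (q - c)"
    using inner_add_left[of "x - q" "q - c" "q - c"] by simp
  ultimately show ?thesis by linarith
qed

lemma weighted_sq:
  fixes p q r c x :: "'a::euclidean_space"
  assumes "b + c' + d = 1" "c = b *\<^sub>R p + c' *\<^sub>R q + d *\<^sub>R r"
  shows "b * ((p - x) \<bullet> (p - x)) + c' * ((q - x) \<bullet> (q - x)) + d * ((r - x) \<bullet> (r - x))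
       = b * ((p - c) \<bullet> (p - c)) + c' * ((q - c) \<bullet> (q - c)) + d * ((r - c) \<bullet> (r - c)) + (c - x) \<bullet> (c - x)"
proof -
  have e: "(y - x) \<bullet> (y - x) = (y - c) \<bullet> (y - c) + 2 * ((y - c) \<bullet> (c - x)) + (c - x) \<bullet> (c - x)" for y
  proof -
    have "(u + w) \<bullet> (u + w) = u \<bullet> u + 2 * (u \<bullet> w) + w \<bullet> w" for u w :: 'a
      by (simp add: inner_add_left inner_add_right inner_commute)
    from this[of "y - c" "c - x"] show ?thesis by simp
  qed
  have z: "b *\<^sub>R (p - c) + c' *\<^sub>R (q - c) + d *\<^sub>R (r - c) = 0"
  proof -
    have "b *\<^sub>R (p - c) + c' *\<^sub>R (q - c) + d *\<^sub>R (r - c) = c - (b + c' + d) *\<^sub>R c"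
      using assms(2) by (simp add: algebra_simps)
    then show ?thesis using assms(1) by simp
  qed
  have "b * ((p - c) \<bullet> (c - x)) + c' * ((q - c) \<bullet> (c - x)) + d * ((r - c) \<bullet> (c - x))
      = (b *\<^sub>R (p - c) + c' *\<^sub>R (q - c) + d *\<^sub>R (r - c)) \<bullet> (c - x)"
    by (simp only: inner_add_left inner_scaleR_left)
  also have "\<dots> = 0" using z by simp
  finally have cross: "b * ((p - c) \<bullet> (c - x)) + c' * ((q - c) \<bullet> (c - x)) + d * ((r - c) \<bullet> (c - x)) = 0" .
  have alg: "b * (A1 + 2 * X1 + S) + c' * (A2 + 2 * X2 + S) + d * (A3 + 2 * X3 + S)
     = b * A1 + c' * A2 + d * A3 + S"
    if "b * X1 + c' * X2 + d * X3 = 0" for A1 A2 A3 X1 X2 X3 S :: real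
  proof -
    have "b * (A1 + 2 * X1 + S) + c' * (A2 + 2 * X2 + S) + d * (A3 + 2 * X3 + S)
      = b * A1 + c' * A2 + d * A3 + 2 * (b * X1 + c' * X2 + d * X3) + (b + c' + d) * S"
      by (simp add: algebra_simps)
    then show ?thesis using that assms(1) by simp
  qed
  show ?thesis unfolding e[of p] e[of q] e[of r] by (rule alg[OF cross])
qed

lemma md4: "max_dist P 4 X = max (max (max (dist (P 1) X) (dist (P 2) X)) (dist (P 3) X)) (dist (P 4) X)"
proof -
  have "{1..4::nat} = {1,2,3,4}" by auto
  then show ?thesis unfolding max_dist_def by (simp add: max.assoc)
qed


theorem theorem9:
  fixes P :: "nat \<Rightarrow> 'a::euclidean_space"
  assumes gp: "general_position P 4"
    and l0: "bary P 4 (equidistant_point P 4) 1 < 0"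
            "bary P 4 (equidistant_point P 4) 2 < 0"
            "bary P 4 (equidistant_point P 4) 3 \<ge> 0"
            "bary P 4 (equidistant_point P 4) 4 \<ge> 0"
    and l12: "bary P 4 (orth_proj (equidistant_point P 4) (aff_span P {1,3,4})) 1 < 0"
    and l11: "bary P 4 (orth_proj (equidistant_point P 4) (aff_span P {2,3,4})) 2 \<ge> 0"
             "bary P 4 (orth_proj (equidistant_point P 4) (aff_span P {2,3,4})) 3 \<ge> 0"
             "bary P 4 (orth_proj (equidistant_point P 4) (aff_span P {2,3,4})) 4 \<ge> 0"
  shows "sec_center P 4 = orth_proj (equidistant_point P 4) (aff_span P {2,3,4})
         \<and> sec_radius P 4 = dist (P 2) (orth_proj (equidistant_point P 4) (aff_span P {2,3,4}))"
proof -
  define Q0 where "Q0 = equidistant_point P 4"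
  define C where "C = orth_proj Q0 (aff_span P {2,3,4})"
  have Q0h: "Q0 \<in> aff_span P {1..4}"
    and Q0d: "\<forall>i\<in>{1..4}. \<forall>j\<in>{1..4}. dist (P i) Q0 = dist (P j) Q0"
    using equi_char[OF gp] unfolding Q0_def by blast+
  obtain l where l: "sum l {1..4} = 1" "Q0 = (\<Sum>i\<in>{1..4}. l i *\<^sub>R P i)" "\<forall>i\<in>{1..4}. bary P 4 Q0 i = l i"
    using bary_hull[OF gp Q0h] by blast
  have l1: "l 1 < 0" using l(3) l0(1) unfolding Q0_def[symmetric] by simp
  have CL: "C \<in> aff_span P {2,3,4}" and Corth: "\<forall>x\<in>aff_span P {2,3,4}. (Q0 - C) \<bullet> (x - C) = 0"
    using orth_proj_char[of Q0 P] unfolding C_def by blast+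
  obtain b c d where bcd: "b + c + d = 1" "C = b *\<^sub>R P 2 + c *\<^sub>R P 3 + d *\<^sub>R P 4"
    using CL unfolding hull3_iff by blast
  define m where "m i = (if i = 2 then b else if i = 3 then c else if i = 4 then d else 0)" for i :: nat
  have "\<forall>i\<in>{1..4}. bary P 4 C i = m i"
    by (rule bary_eq[OF gp]) (unfold sum4, use bcd in \<open>simp_all add: m_def\<close>)
  then have "bary P 4 C 2 = b" "bary P 4 C 3 = c" "bary P 4 C 4 = d" by (auto simp: m_def)
  with l11 have b0: "b \<ge> 0" and c0: "c \<ge> 0" and d0: "d \<ge> 0" unfolding Q0_def[symmetric] C_def[symmetric] by auto
  define v where "v = Q0 - C"
  have PjL: "P j \<in> aff_span P {2,3,4}" if "j \<in> {2,3,4}" for j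
    unfolding aff_span_def using that by (intro hull_inc) auto
  have vo: "v \<bullet> (P j - C) = 0" if "j \<in> {2,3,4}" for j
    using Corth PjL[OF that] unfolding v_def by blast
  have vsum: "v = l 1 *\<^sub>R (P 1 - C) + l 2 *\<^sub>R (P 2 - C) + l 3 *\<^sub>R (P 3 - C) + l 4 *\<^sub>R (P 4 - C)"
  proof -
    have s: "l 1 + l 2 + l 3 + l 4 = 1" using l(1) unfolding sum4 .
    have "Q0 = l 1 *\<^sub>R P 1 + l 2 *\<^sub>R P 2 + l 3 *\<^sub>R P 3 + l 4 *\<^sub>R P 4" using l(2) unfolding sum4 .
    moreover have "C = (l 1 + l 2 + l 3 + l 4) *\<^sub>R C" using s by simp
    ultimately show ?thesis unfolding v_def by (simp add: algebra_simps)
  qed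
  have "v \<bullet> v = l 1 * (v \<bullet> (P 1 - C)) + l 2 * (v \<bullet> (P 2 - C)) + l 3 * (v \<bullet> (P 3 - C)) + l 4 * (v \<bullet> (P 4 - C))"
    by (subst (2) vsum) (simp only: inner_add_right inner_scaleR_right)
  also have "\<dots> = l 1 * (v \<bullet> (P 1 - C))" using vo[of 2] vo[of 3] vo[of 4] by simp
  finally have vv: "v \<bullet> v = l 1 * (v \<bullet> (P 1 - C))" .
  have v1: "(P 1 - C) \<bullet> v \<le> 0"
  proof -
    have "0 \<le> v \<bullet> v" by simp
    then have "0 \<le> l 1 * (v \<bullet> (P 1 - C))" unfolding vv .
    with l1 show ?thesis by (simp add: inner_commute zero_le_mult_iff)
  qed
  define R2 where "R2 = (P 1 - Q0) \<bullet> (P 1 - Q0)"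
  have R2j: "(P j - Q0) \<bullet> (P j - Q0) = R2" if "j \<in> {1..4}" for j
  proof -
    have "dist (P j) Q0 = dist (P 1) Q0" using Q0d[rule_format, OF that, of 1] by simp
    then show ?thesis unfolding R2_def by (simp add: dist_norm norm_eq_sqrt_inner)
  qed
  have sqj: "(P j - C) \<bullet> (P j - C) = R2 - v \<bullet> v" if "j \<in> {2,3,4}" for j
    using sq_shift[of "P j" C Q0] R2j[of j] vo[OF that] that unfolding v_def
    by (auto simp: inner_commute)
  have sq1: "(P 1 - C) \<bullet> (P 1 - C) \<le> R2 - v \<bullet> v"
    using sq_shift[of "P 1" C Q0] R2j[of 1] v1 unfolding v_def by simp
  define r where "r = dist (P 2) C"
  have r2: "r ^ 2 = R2 - v \<bullet> v" unfolding r_def using sqj[of 2]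
    by (simp add: dist_norm power2_norm_eq_inner)
  have dj: "dist (P j) C = r" if "j \<in> {2,3,4}" for j
    unfolding r_def using sqj[OF that] sqj[of 2] by (simp add: dist_norm norm_eq_sqrt_inner)
  have d1: "dist (P 1) C \<le> r"
    unfolding r_def using sq1 sqj[of 2] by (simp add: dist_norm norm_eq_sqrt_inner)
  have mdC: "max_dist P 4 C = r" unfolding md4 using d1 dj[of 2] dj[of 3] dj[of 4] by simp
  have r0: "r \<ge> 0" unfolding r_def by simp
  have lower: "r ^ 2 + (C - X) \<bullet> (C - X) \<le> (max_dist P 4 X) ^ 2" for X
  proof -
    define M where "M = max_dist P 4 X"
    have dM: "dist (P j) X \<le> M" if "j \<in> {1,2,3,4}" for j
      unfolding M_def md4 using that by auto
    have sqM: "(P j - X) \<bullet> (P j - X) \<le> M ^ 2" if "j \<in> {1,2,3,4}" for j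
    proof -
      have "(P j - X) \<bullet> (P j - X) = (dist (P j) X) ^ 2" by (simp add: dist_norm power2_norm_eq_inner)
      also have "\<dots> \<le> M ^ 2" using dM[OF that] by (simp add: power_mono)
      finally show ?thesis .
    qed
    have "r ^ 2 + (C - X) \<bullet> (C - X)
        = b * ((P 2 - C) \<bullet> (P 2 - C)) + c * ((P 3 - C) \<bullet> (P 3 - C)) + d * ((P 4 - C) \<bullet> (P 4 - C)) + (C - X) \<bullet> (C - X)"
      using sqj[of 2] sqj[of 3] sqj[of 4] r2 bcd(1) by (simp add: distrib_right[symmetric])
    also have "\<dots> = b * ((P 2 - X) \<bullet> (P 2 - X)) + c * ((P 3 - X) \<bullet> (P 3 - X)) + d * ((P 4 - X) \<bullet> (P 4 - X))"
      by (rule weighted_sq[OF bcd, symmetric])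
    also have "\<dots> \<le> b * M ^ 2 + c * M ^ 2 + d * M ^ 2"
      using sqM[of 2] sqM[of 3] sqM[of 4] b0 c0 d0 by (intro add_mono mult_left_mono) auto
    also have "\<dots> = M ^ 2" using bcd(1) by (simp add: distrib_right[symmetric])
    finally show ?thesis unfolding M_def .
  qed
  have mdpos: "max_dist P 4 X \<ge> 0" for X unfolding md4 using zero_le_dist[of "P 4" X] by linarith
  have rle: "r \<le> max_dist P 4 X" for X
  proof -
    have "r ^ 2 \<le> (max_dist P 4 X) ^ 2" using lower[of X] inner_ge_zero[of "C - X"] by linarith
    then show ?thesis using mdpos[of X] r0 by (simp add: power2_le_iff_abs_le)
  qed
  have center: "sec_center P 4 = C"
    unfolding sec_center_def
  proof (rule the_equality)
    show "\<forall>Q'. max_dist P 4 C \<le> max_dist P 4 Q'" using mdC rle by simp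
  next
    fix X assume "\<forall>Q'. max_dist P 4 X \<le> max_dist P 4 Q'"
    then have "max_dist P 4 X \<le> r" using mdC by metis
    then have "(max_dist P 4 X) ^ 2 \<le> r ^ 2" using mdpos[of X] by (simp add: power_mono)
    with lower[of X] have "(C - X) \<bullet> (C - X) \<le> 0" by simp
    then have "(C - X) \<bullet> (C - X) = 0" using inner_ge_zero[of "C - X"] by linarith
    then show "X = C" by simp
  qed
  have radius: "sec_radius P 4 = r"
    unfolding sec_radius_def
  proof (rule antisym)
    have bdd: "bdd_below (range (max_dist P 4))" using mdpos by (intro bdd_belowI[of _ 0]) auto
    show "(INF Q. max_dist P 4 Q) \<le> r"
      using cINF_lower[OF bdd, of C] mdC by simp
    show "r \<le> (INF Q. max_dist P 4 Q)"
      by (rule cINF_greatest) (auto simp: rle)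
  qed
  show ?thesis using center radius unfolding C_def Q0_def r_def by simp
qed

end
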